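(* Let $G$ be an additive subgroup of $\mathbb{C}$ with $\mathrm{rank}\,G\ge 2$, and let $V$ be a nontrivial irreducible Harish-Chandra module over $\mathrm{Vir}[G]$. Let $I$ be a finite subset of $\mathrm{supp}V$ and let $G_I$ be a subgroup of $G$ such that (a) $G_I\cong\mathbb{Z}^k$ for some $k\in\mathbb{N}$, (b) $U(G_I)V_\mu=U(G_I)V_{\mu'}$ and $\mu-\mu'\in G_I$ for all $\mu,\mu'\in I$, and (c) $V_\mu$ is an irreducible $U(G_I)_0$-module for every $\mu\in I$. Let $G'$ be a subgroup of $G$ containing $G_I$. Then for any $\lambda\in I$, the $\mathrm{Vir}[G']$-module $V_{\lambda+G'}$ has a unique irreducible $\mathrm{Vir}[G']$-subquotient $V'$ with $\dim V'_\mu=\dim V_\mu$ for all $\mu\in I$.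
   Context: $\mathbb{N}$ denotes the positive integers. For a nonzero additive subgroup $G$ of $\mathbb{C}$, $\mathrm{Vir}[G]$ is the complex Lie algebra with basis $\{C,d_x:x\in G\}$ and brackets $[d_x,d_y]=(y-x)d_{x+y}+\delta_{x,-y}\frac{x^3-x}{12}C$, $[C,d_x]=0$; for a subgroup $H\subseteq G$, $\mathrm{Vir}[H]$ is the subalgebra spanned by $C$ and $d_x$, $x\in H$. $U(H)$ is the universal enveloping algebra of $\mathrm{Vir}[H]$, and $U(H)_a=\{y\in U(H):[d_0,y]=ay\}$. The rank of a subgroup $A$ of $\mathbb{C}$ is the maximal $r$ such that there exist nonzero $g_1,\dots,g_r\in A$ with $\mathbb{Z}g_1+\dots+\mathbb{Z}g_r$ a direct sum. For a module $V$ on which $C$ acts as a scalar, $V_\lambda=\{v:d_0v=\lambda v\}$; weight module: sum of weight spaces; Harish-Chandra: weight module with finite-dimensional weight spaces; $\mathrm{supp}V=\{\lambda:V_\lambda\ne0\}$; trivial: $\mathrm{Vir}[G]V=0$. For $S\subseteq\mathbb{C}$, $V_S=\bigoplus_{x\in S}V_x$; for a subgroup $H$ and $\lambda\in\mathbb{C}$, $V_{\lambda+H}$ is a $\mathrm{Vir}[H]$-module. A subquotient of a module is $W/W'$ for submodules $W'\subseteq W$. *)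

theory Defs
  imports Complex_Main "HOL-Library.Extended_Nat"
begin

definition add_subgroup :: "complex set \<Rightarrow> bool" where
  "add_subgroup A \<longleftrightarrow> 0 \<in> A \<and> (\<forall>x\<in>A. \<forall>y\<in>A. x + y \<in> A) \<and> (\<forall>x\<in>A. - x \<in> A)"

definition direct_family :: "complex set \<Rightarrow> nat \<Rightarrow> (nat \<Rightarrow> complex) \<Rightarrow> bool" where
  "direct_family A r g \<longleftrightarrow> (\<forall>i<r. g i \<in> A \<and> g i \<noteq> 0) \<and>
     (\<forall>n::nat \<Rightarrow> int. (\<Sum>i<r. of_int (n i) * g i) = 0 \<longrightarrow> (\<forall>i<r. of_int (n i) * g i = 0))"

definition grank :: "complex set \<Rightarrow> enat" where
  "grank A = Sup {enat r | r. \<exists>g. direct_family A r g}"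

definition iso_Zk :: "complex set \<Rightarrow> nat \<Rightarrow> bool" where
  "iso_Zk A k \<longleftrightarrow> (\<exists>g::nat \<Rightarrow> complex.
     A = {(\<Sum>i<k. of_int (n i) * g i) | n::nat \<Rightarrow> int. True} \<and>
     (\<forall>n::nat \<Rightarrow> int. (\<Sum>i<k. of_int (n i) * g i) = 0 \<longrightarrow> (\<forall>i<k. n i = 0)))"

text \<open>The module is the whole complex vector space 'v (scalar multiplication \<open>sc\<close>);
  \<open>\<rho> x\<close> is the action of d_x and C acts by the scalar \<open>c\<close>.\<close>

definition vir_module ::
  "(complex \<Rightarrow> 'v::ab_group_add \<Rightarrow> 'v) \<Rightarrow> complex set \<Rightarrow> complex \<Rightarrow> (complex \<Rightarrow> 'v \<Rightarrow> 'v) \<Rightarrow> bool" where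
  "vir_module sc G c \<rho> \<longleftrightarrow> vector_space sc \<and>
     (\<forall>x\<in>G. Vector_Spaces.linear sc sc (\<rho> x)) \<and>
     (\<forall>x\<in>G. \<forall>y\<in>G. \<forall>v. \<rho> x (\<rho> y v) - \<rho> y (\<rho> x v) =
        sc (y - x) (\<rho> (x + y) v) + (if x = - y then sc ((x^3 - x) / 12 * c) v else 0))"

definition wt :: "(complex \<Rightarrow> 'v::ab_group_add \<Rightarrow> 'v) \<Rightarrow> (complex \<Rightarrow> 'v \<Rightarrow> 'v) \<Rightarrow> complex \<Rightarrow> 'v set" where
  "wt sc \<rho> lam = {v. \<rho> 0 v = sc lam v}"

definition supp :: "(complex \<Rightarrow> 'v::ab_group_add \<Rightarrow> 'v) \<Rightarrow> (complex \<Rightarrow> 'v \<Rightarrow> 'v) \<Rightarrow> complex set" where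
  "supp sc \<rho> = {lam. wt sc \<rho> lam \<noteq> {0}}"

definition wsum :: "(complex \<Rightarrow> 'v::ab_group_add \<Rightarrow> 'v) \<Rightarrow> (complex \<Rightarrow> 'v \<Rightarrow> 'v) \<Rightarrow> complex set \<Rightarrow> 'v set" where
  "wsum sc \<rho> S = module.span sc (\<Union>\<mu>\<in>S. wt sc \<rho> \<mu>)"

definition fin_dim :: "(complex \<Rightarrow> 'v::ab_group_add \<Rightarrow> 'v) \<Rightarrow> 'v set \<Rightarrow> bool" where
  "fin_dim sc S \<longleftrightarrow> (\<exists>B. finite B \<and> S \<subseteq> module.span sc B)"

definition weight_module :: "(complex \<Rightarrow> 'v::ab_group_add \<Rightarrow> 'v) \<Rightarrow> (complex \<Rightarrow> 'v \<Rightarrow> 'v) \<Rightarrow> bool" where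
  "weight_module sc \<rho> \<longleftrightarrow> wsum sc \<rho> UNIV = UNIV"

definition harish_chandra :: "(complex \<Rightarrow> 'v::ab_group_add \<Rightarrow> 'v) \<Rightarrow> (complex \<Rightarrow> 'v \<Rightarrow> 'v) \<Rightarrow> bool" where
  "harish_chandra sc \<rho> \<longleftrightarrow> weight_module sc \<rho> \<and> (\<forall>lam. fin_dim sc (wt sc \<rho> lam))"

text \<open>Vir[H]-submodule (C acts by a scalar, so only the d_x, x in H, matter).\<close>
definition submod :: "(complex \<Rightarrow> 'v::ab_group_add \<Rightarrow> 'v) \<Rightarrow> (complex \<Rightarrow> 'v \<Rightarrow> 'v) \<Rightarrow> complex set \<Rightarrow> 'v set \<Rightarrow> bool" where
  "submod sc \<rho> H W \<longleftrightarrow> module.subspace sc W \<and> (\<forall>x\<in>H. \<forall>w\<in>W. \<rho> x w \<in> W)"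

definition irreducible_module ::
  "(complex \<Rightarrow> 'v::ab_group_add \<Rightarrow> 'v) \<Rightarrow> (complex \<Rightarrow> 'v \<Rightarrow> 'v) \<Rightarrow> complex set \<Rightarrow> bool" where
  "irreducible_module sc \<rho> G \<longleftrightarrow> (UNIV :: 'v set) \<noteq> {0} \<and>
     (\<forall>W. submod sc \<rho> G W \<longrightarrow> W = {0} \<or> W = UNIV)"

definition trivial_module ::
  "(complex \<Rightarrow> 'v::ab_group_add \<Rightarrow> 'v) \<Rightarrow> complex set \<Rightarrow> complex \<Rightarrow> (complex \<Rightarrow> 'v \<Rightarrow> 'v) \<Rightarrow> bool" where
  "trivial_module sc G c \<rho> \<longleftrightarrow> (\<forall>v. sc c v = 0) \<and> (\<forall>x\<in>G. \<forall>v. \<rho> x v = 0)"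

text \<open>U(H) is spanned by the monomials d_{x_1}...d_{x_n} (x_i in H) and powers of C; C acts
  by a scalar, so the action of U(H) on V is spanned by the operators below.
  A monomial has ad d_0-weight x_1+...+x_n, so U(H)_a acts via the monomials of weight a.\<close>
definition mono :: "(complex \<Rightarrow> 'v \<Rightarrow> 'v) \<Rightarrow> complex list \<Rightarrow> 'v \<Rightarrow> 'v" where
  "mono \<rho> xs = foldr (\<lambda>x f. \<rho> x \<circ> f) xs id"

definition U_apply :: "(complex \<Rightarrow> 'v::ab_group_add \<Rightarrow> 'v) \<Rightarrow> (complex \<Rightarrow> 'v \<Rightarrow> 'v) \<Rightarrow> complex set \<Rightarrow> 'v set \<Rightarrow> 'v set" where
  "U_apply sc \<rho> H S = module.span sc {mono \<rho> xs v | xs v. set xs \<subseteq> H \<and> v \<in> S}"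

definition irred_U0 :: "(complex \<Rightarrow> 'v::ab_group_add \<Rightarrow> 'v) \<Rightarrow> (complex \<Rightarrow> 'v \<Rightarrow> 'v) \<Rightarrow> complex set \<Rightarrow> 'v set \<Rightarrow> bool" where
  "irred_U0 sc \<rho> H S \<longleftrightarrow> S \<noteq> {0} \<and>
     (\<forall>W. module.subspace sc W \<and> W \<subseteq> S \<and>
          (\<forall>xs. set xs \<subseteq> H \<and> sum_list xs = 0 \<longrightarrow> (\<forall>w\<in>W. mono \<rho> xs w \<in> W))
        \<longrightarrow> W = {0} \<or> W = S)"

definition irred_subquot ::
  "(complex \<Rightarrow> 'v::ab_group_add \<Rightarrow> 'v) \<Rightarrow> (complex \<Rightarrow> 'v \<Rightarrow> 'v) \<Rightarrow> complex set \<Rightarrow> 'v set \<Rightarrow> 'v set \<Rightarrow> 'v set \<Rightarrow> bool" where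
  "irred_subquot sc \<rho> H M W W' \<longleftrightarrow>
     submod sc \<rho> H W \<and> submod sc \<rho> H W' \<and> W' \<subseteq> W \<and> W \<subseteq> M \<and> W' \<noteq> W \<and>
     (\<forall>X. submod sc \<rho> H X \<and> W' \<subseteq> X \<and> X \<subseteq> W \<longrightarrow> X = W' \<or> X = W)"

text \<open>dim (W/W')_\<mu>. Submodules of weight modules are weight modules, so
  (W/W')_\<mu> = W_\<mu>/W'_\<mu>; all weight spaces here are finite-dimensional.\<close>
definition sq_wdim ::
  "(complex \<Rightarrow> 'v::ab_group_add \<Rightarrow> 'v) \<Rightarrow> (complex \<Rightarrow> 'v \<Rightarrow> 'v) \<Rightarrow> 'v set \<Rightarrow> 'v set \<Rightarrow> complex \<Rightarrow> nat" where
  "sq_wdim sc \<rho> W W' \<mu> = vector_space.dim sc (W \<inter> wt sc \<rho> \<mu>) - vector_space.dim sc (W' \<inter> wt sc \<rho> \<mu>)"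

text \<open>W1/W1' and W2/W2' are isomorphic Vir[H]-modules: a linear map f with f(W1) in W2
  inducing a bijective Vir[H]-homomorphism W1/W1' -> W2/W2'.\<close>
definition sq_iso ::
  "(complex \<Rightarrow> 'v::ab_group_add \<Rightarrow> 'v) \<Rightarrow> (complex \<Rightarrow> 'v \<Rightarrow> 'v) \<Rightarrow> complex set \<Rightarrow>
   'v set \<Rightarrow> 'v set \<Rightarrow> 'v set \<Rightarrow> 'v set \<Rightarrow> bool" where
  "sq_iso sc \<rho> H W1 W1' W2 W2' \<longleftrightarrow> (\<exists>f. Vector_Spaces.linear sc sc f \<and>
     (\<forall>w\<in>W1. f w \<in> W2) \<and>
     (\<forall>w\<in>W1. f w \<in> W2' \<longleftrightarrow> w \<in> W1') \<and>
     (\<forall>u\<in>W2. \<exists>w\<in>W1. u - f w \<in> W2') \<and>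
     (\<forall>x\<in>H. \<forall>w\<in>W1. f (\<rho> x w) - \<rho> x (f w) \<in> W2'))"

end

theory Submission
  imports Defs
begin

locale VM = vector_space scale for scale :: "complex \<Rightarrow> 'v::ab_group_add \<Rightarrow> 'v" +
  fixes \<rho> :: "complex \<Rightarrow> 'v \<Rightarrow> 'v" and G :: "complex set"
  assumes lin: "x \<in> G \<Longrightarrow> Vector_Spaces.linear scale scale (\<rho> x)"
    and G0: "0 \<in> G"
    and shift: "x \<in> G \<Longrightarrow> v \<in> wt scale \<rho> \<mu> \<Longrightarrow> \<rho> x v \<in> wt scale \<rho> (\<mu> + x)"
begin

abbreviation Wt where "Wt \<mu> \<equiv> wt scale \<rho> \<mu>"

lemma lin_add: "x \<in> G \<Longrightarrow> \<rho> x (a + b) = \<rho> x a + \<rho> x b"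
  using lin[of x] unfolding Vector_Spaces.linear_iff by auto

lemma lin_scale: "x \<in> G \<Longrightarrow> \<rho> x (scale c a) = scale c (\<rho> x a)"
  using lin[of x] unfolding Vector_Spaces.linear_iff by auto

lemma lin_0: "x \<in> G \<Longrightarrow> \<rho> x 0 = 0"
  using lin_scale[of x 0 0] by simp

lemma lin_diff: "x \<in> G \<Longrightarrow> \<rho> x (a - b) = \<rho> x a - \<rho> x b"
  using lin_add[of x "a - b" b] by (simp add: algebra_simps)

lemma lin_sum: "x \<in> G \<Longrightarrow> \<rho> x (\<Sum>i\<in>S. f i) = (\<Sum>i\<in>S. \<rho> x (f i))"
  by (induction S rule: infinite_finite_induct) (auto simp: lin_0 lin_add)

lemma wt_subspace: "subspace (Wt \<mu>)"
  unfolding subspace_def wt_def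
  using G0 by (auto simp: lin_0 lin_add lin_scale scale_right_distrib mult.commute)

lemma span_stable:
  assumes "x \<in> G" "\<forall>s\<in>S. \<rho> x s \<in> span S" "v \<in> span S"
  shows "\<rho> x v \<in> span S"
  using assms(3)
proof (induction rule: span_induct_alt)
  case base then show ?case using assms(1) by (simp add: lin_0 span_zero)
next
  case (step c y z)
  then show ?case using assms by (simp add: lin_add lin_scale span_add span_scale)
qed

lemma span_submod:
  assumes "H \<subseteq> G" "\<forall>x\<in>H. \<forall>s\<in>S. \<rho> x s \<in> span S"
  shows "submod scale \<rho> H (span S)"
  unfolding submod_def using assms span_stable by blast

lemma comp:
  assumes "finite S" "subspace N" "\<forall>v\<in>N. \<rho> 0 v \<in> N"
  shows "(\<forall>\<mu>\<in>S. f \<mu> \<in> Wt \<mu>) \<Longrightarrow> (\<Sum>\<mu>\<in>S. f \<mu>) \<in> N \<Longrightarrow> \<forall>\<mu>\<in>S. f \<mu> \<in> N"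
  using assms(1)
proof (induction S arbitrary: f rule: finite_induct)
  case empty then show ?case by simp
next
  case (insert a S)
  define s where "s = (\<Sum>\<mu>\<in>insert a S. f \<mu>)"
  have r0: "\<rho> 0 s = (\<Sum>\<mu>\<in>insert a S. scale \<mu> (f \<mu>))"
    unfolding s_def using insert.prems(1) G0 by (auto simp: lin_sum wt_def intro!: sum.cong)
  have "\<rho> 0 s - scale a s \<in> N"
    using insert.prems(2) assms(2,3) s_def
    by (simp add: subspace_diff subspace_scale)
  also have "\<rho> 0 s - scale a s = (\<Sum>\<mu>\<in>insert a S. scale \<mu> (f \<mu>)) - scale a (\<Sum>\<mu>\<in>insert a S. f \<mu>)"
    using r0 s_def by simp
  also have "\<dots> = (\<Sum>\<mu>\<in>S. scale (\<mu> - a) (f \<mu>))"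
    using insert.hyps
    by (simp add: scale_sum_right scale_left_diff_distrib sum_subtractf scale_right_distrib)
  finally have gN: "(\<Sum>\<mu>\<in>S. scale (\<mu> - a) (f \<mu>)) \<in> N" .
  have "\<forall>\<mu>\<in>S. scale (\<mu> - a) (f \<mu>) \<in> Wt \<mu>"
    using insert.prems(1) wt_subspace by (simp add: subspace_scale)
  then have g: "\<forall>\<mu>\<in>S. scale (\<mu> - a) (f \<mu>) \<in> N"
    using insert.IH[of "\<lambda>\<mu>. scale (\<mu> - a) (f \<mu>)"] gN by blast
  have fS: "\<forall>\<mu>\<in>S. f \<mu> \<in> N"
  proof
    fix \<mu> assume m: "\<mu> \<in> S"
    then have "\<mu> \<noteq> a" using insert.hyps by auto
    then have "f \<mu> = scale (1 / (\<mu> - a)) (scale (\<mu> - a) (f \<mu>))" by simp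
    then show "f \<mu> \<in> N" using g m assms(2) by (metis subspace_scale)
  qed
  then have "(\<Sum>\<mu>\<in>S. f \<mu>) \<in> N" using assms(2) by (simp add: subspace_sum)
  moreover have "f a = s - (\<Sum>\<mu>\<in>S. f \<mu>)" unfolding s_def using insert.hyps by simp
  ultimately have "f a \<in> N" using insert.prems(2) s_def assms(2) by (metis subspace_diff)
  then show ?case using fS by simp
qed

lemma dec:
  assumes "v \<in> span (\<Union>\<mu>\<in>A. Wt \<mu>)"
  shows "\<exists>f S. finite S \<and> S \<subseteq> A \<and> (\<forall>\<mu>. f \<mu> \<in> Wt \<mu>) \<and> v = (\<Sum>\<mu>\<in>S. f \<mu>)"
  using assms
proof (induction rule: span_induct_alt)
  case base
  show ?case by (rule exI[of _ "\<lambda>_. 0"], rule exI[of _ "{}"]) (simp add: wt_subspace subspace_0)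
next
  case (step c x y)
  then obtain \<mu>0 where m0: "\<mu>0 \<in> A" "x \<in> Wt \<mu>0" by auto
  from step obtain f S where fS: "finite S" "S \<subseteq> A" "\<forall>\<mu>. f \<mu> \<in> Wt \<mu>" "y = (\<Sum>\<mu>\<in>S. f \<mu>)" by auto
  define f' where "f' = f(\<mu>0 := scale c x + (if \<mu>0 \<in> S then f \<mu>0 else 0))"
  have "\<forall>\<mu>. f' \<mu> \<in> Wt \<mu>"
    using fS(3) m0 wt_subspace[of \<mu>0]
    by (auto simp: f'_def subspace_add subspace_scale subspace_0)
  moreover have "scale c x + y = (\<Sum>\<mu>\<in>insert \<mu>0 S. f' \<mu>)"
  proof (cases "\<mu>0 \<in> S")
    case True
    have "(\<Sum>\<mu>\<in>insert \<mu>0 S. f' \<mu>) = f' \<mu>0 + (\<Sum>\<mu>\<in>S - {\<mu>0}. f' \<mu>)"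
      using fS(1) True by (simp add: insert_absorb sum.remove)
    also have "(\<Sum>\<mu>\<in>S - {\<mu>0}. f' \<mu>) = (\<Sum>\<mu>\<in>S - {\<mu>0}. f \<mu>)"
      by (rule sum.cong) (auto simp: f'_def)
    also have "y = f \<mu>0 + (\<Sum>\<mu>\<in>S - {\<mu>0}. f \<mu>)"
      using fS True by (simp add: sum.remove)
    ultimately show ?thesis using True by (simp add: f'_def add.assoc)
  next
    case False
    have "(\<Sum>\<mu>\<in>S. f' \<mu>) = (\<Sum>\<mu>\<in>S. f \<mu>)"
      by (rule sum.cong) (use False in \<open>auto simp: f'_def\<close>)
    then show ?thesis using False fS by (simp add: f'_def)
  qed
  ultimately show ?case using fS m0 by (intro exI[of _ f'] exI[of _ "insert \<mu>0 S"]) auto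
qed

definition Y where "Y lam = span (\<Union>\<mu>\<in>{\<mu>. \<mu> \<noteq> lam}. Wt \<mu>)"

lemma sub_Y:
  assumes wm: "span (\<Union>\<mu>\<in>UNIV. Wt \<mu>) = UNIV"
    and N: "subspace N" "\<forall>v\<in>N. \<rho> 0 v \<in> N" "N \<inter> Wt lam \<subseteq> {0}"
  shows "N \<subseteq> Y lam"
proof
  fix n assume n: "n \<in> N"
  obtain f S where fS: "finite S" "\<forall>\<mu>. f \<mu> \<in> Wt \<mu>" "n = (\<Sum>\<mu>\<in>S. f \<mu>)"
    using dec[of n UNIV] wm by auto
  have fN: "\<forall>\<mu>\<in>S. f \<mu> \<in> N" using comp[OF fS(1) N(1,2), of f] fS n by auto
  show "n \<in> Y lam" unfolding fS(3) Y_def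
  proof (rule span_sum)
    fix \<mu> assume m: "\<mu> \<in> S"
    show "f \<mu> \<in> span (\<Union>\<mu>\<in>{\<mu>. \<mu> \<noteq> lam}. Wt \<mu>)"
    proof (cases "\<mu> = lam")
      case True
      then have "f \<mu> = 0" using fN m fS(2) N(3) by auto
      then show ?thesis by (simp add: span_zero)
    next
      case False
      then show ?thesis using fS(2) by (auto intro: span_base)
    qed
  qed
qed

lemma Y_int: "Y lam \<inter> Wt lam \<subseteq> {0}"
proof
  fix v assume v: "v \<in> Y lam \<inter> Wt lam"
  obtain f S where fS: "finite S" "S \<subseteq> {\<mu>. \<mu> \<noteq> lam}" "\<forall>\<mu>. f \<mu> \<in> Wt \<mu>" "v = (\<Sum>\<mu>\<in>S. f \<mu>)"
    using dec[of v "{\<mu>. \<mu> \<noteq> lam}"] v unfolding Y_def by auto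
  define f' where "f' = f(lam := - v)"
  have ln: "lam \<notin> S" using fS(2) by auto
  have s: "(\<Sum>\<mu>\<in>insert lam S. f' \<mu>) = - v + (\<Sum>\<mu>\<in>S. f \<mu>)"
    using fS(1) ln by (simp add: f'_def) (rule sum.cong, auto)
  have sub0: "subspace {0}" by (simp add: subspace_def)
  have s0: "(\<Sum>\<mu>\<in>insert lam S. f' \<mu>) \<in> {0}" using s fS(4) by simp
  have "\<forall>\<mu>. f' \<mu> \<in> Wt \<mu>"
    using fS v wt_subspace[of lam] by (auto simp: f'_def subspace_neg)
  then have "\<forall>\<mu>\<in>insert lam S. f' \<mu> \<in> {0}"
    using comp[OF _ sub0, of "insert lam S" f'] s0 fS(1) G0 lin_0 by auto
  then have "f' lam = 0" by auto
  then show "v \<in> {0}" by (simp add: f'_def)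
qed

lemma mono_Cons: "mono \<rho> (x # xs) v = \<rho> x (mono \<rho> xs v)"
  by (simp add: mono_def)

lemma mono_Nil: "mono \<rho> [] v = v"
  by (simp add: mono_def)

lemma mono_wt: "set xs \<subseteq> G \<Longrightarrow> v \<in> Wt \<mu> \<Longrightarrow> mono \<rho> xs v \<in> Wt (\<mu> + sum_list xs)"
proof (induction xs)
  case Nil then show ?case by (simp add: mono_Nil)
next
  case (Cons a xs)
  then have "\<rho> a (mono \<rho> xs v) \<in> Wt ((\<mu> + sum_list xs) + a)" by (intro shift) auto
  then show ?case by (simp add: mono_Cons add_ac)
qed

lemma mono_stable:
  "set xs \<subseteq> H \<Longrightarrow> \<forall>x\<in>H. \<forall>w\<in>X. \<rho> x w \<in> X \<Longrightarrow> w \<in> X \<Longrightarrow> mono \<rho> xs w \<in> X"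
  by (induction xs) (auto simp: mono_Cons mono_Nil)

lemma U_submod:
  assumes "H \<subseteq> G" shows "submod scale \<rho> H (U_apply scale \<rho> H S)"
  unfolding U_apply_def
proof (rule span_submod[OF assms], intro ballI)
  fix x s assume x: "x \<in> H" and s: "s \<in> {mono \<rho> xs v |xs v. set xs \<subseteq> H \<and> v \<in> S}"
  then obtain xs v where "s = mono \<rho> xs v" "set xs \<subseteq> H" "v \<in> S" by auto
  then have "\<rho> x s \<in> {mono \<rho> xs v |xs v. set xs \<subseteq> H \<and> v \<in> S}"
    using x by (intro CollectI exI[of _ "x # xs"] exI[of _ v]) (auto simp: mono_Cons)
  then show "\<rho> x s \<in> span {mono \<rho> xs v |xs v. set xs \<subseteq> H \<and> v \<in> S}" by (rule span_base)
qed

lemma U_min: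
  assumes "S \<subseteq> X" "submod scale \<rho> H X" shows "U_apply scale \<rho> H S \<subseteq> X"
  unfolding U_apply_def
  apply (rule span_minimal)
  using assms mono_stable[of _ H X] unfolding submod_def by auto

lemma U_sup: "S \<subseteq> U_apply scale \<rho> H S"
  unfolding U_apply_def
  by (rule subsetI, rule span_base, rule CollectI, rule_tac x="[]" in exI) (auto simp: mono_Nil)

lemma U_mono: "H \<subseteq> H' \<Longrightarrow> U_apply scale \<rho> H S \<subseteq> U_apply scale \<rho> H' S"
  unfolding U_apply_def by (rule span_mono) auto

lemma fd_basis:
  assumes "T \<subseteq> span B0" "finite B0"
  obtains B where "B \<subseteq> T" "independent B" "T \<subseteq> span B" "finite B" "card B = dim T"
proof -
  obtain B where B: "B \<subseteq> T" "independent B" "T \<subseteq> span B" "card B = dim T"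
    using basis_exists by blast
  have "finite B" using independent_span_bound[OF assms(2) B(2)] B(1) assms(1) by auto
  then show ?thesis using that B by auto
qed

lemma fd_dim_mono:
  assumes "T \<subseteq> span B0" "finite B0" "S \<subseteq> T" shows "dim S \<le> dim T"
proof -
  obtain B where B: "B \<subseteq> T" "independent B" "T \<subseteq> span B" "finite B" "card B = dim T"
    using fd_basis[OF assms(1,2)] by blast
  show ?thesis using dim_le_card[of S B] B assms(3) by auto
qed

lemma fd_dim0:
  assumes "T \<subseteq> span B0" "finite B0" "dim T = 0" shows "T \<subseteq> {0}"
proof -
  obtain B where B: "B \<subseteq> T" "independent B" "T \<subseteq> span B" "finite B" "card B = dim T"
    using fd_basis[OF assms(1,2)] by blast
  then have "B = {}" using assms(3) by auto
  then show ?thesis using B(3) by auto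
qed

lemma fd_dim_eq:
  assumes "T \<subseteq> span B0" "finite B0" "S \<subseteq> T" "subspace S" "dim T \<le> dim S"
  shows "T \<subseteq> S"
proof -
  obtain BT where BT: "BT \<subseteq> T" "independent BT" "T \<subseteq> span BT" "finite BT" "card BT = dim T"
    using fd_basis[OF assms(1,2)] by blast
  have ST: "S \<subseteq> span B0" using assms by auto
  obtain B where B: "B \<subseteq> S" "independent B" "S \<subseteq> span B" "finite B" "card B = dim S"
    using fd_basis[OF ST assms(2)] by blast
  have "T \<subseteq> span B"
  proof
    fix t assume t: "t \<in> T"
    show "t \<in> span B"
    proof (rule ccontr)
      assume nt: "t \<notin> span B"
      then have ind: "independent (insert t B)" using B(2) by (rule independent_insertI)
      have "insert t B \<subseteq> span BT" using t B(1) assms(3) BT(3) by auto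
      then have "card (insert t B) \<le> card BT" using independent_span_bound[OF BT(4) ind] by auto
      moreover have "t \<notin> B" using nt span_base by blast
      ultimately show False using B(4,5) BT(5) assms(5) by simp
    qed
  qed
  also have "span B \<subseteq> S" using B(1) assms(4) by (rule span_minimal)
  finally show ?thesis .
qed

lemma dim_zero_set: "dim {0} = 0"
proof -
  have "dim {0} = dim (span {})" by simp
  also have "\<dots> = dim {}" by (rule dim_span)
  also have "\<dots> = 0" using dim_eq_card_independent[OF independent_empty] by simp
  finally show ?thesis .
qed

lemma main:
  fixes GI G' I :: "complex set" and lam :: complex
  assumes wm: "span (\<Union>\<mu>\<in>UNIV. Wt \<mu>) = UNIV"
    and fd: "\<forall>\<mu>. fin_dim scale (Wt \<mu>)"
    and I: "I \<subseteq> supp scale \<rho>"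
    and b: "\<forall>\<mu>\<in>I. \<forall>\<mu>'\<in>I. U_apply scale \<rho> GI (Wt \<mu>) = U_apply scale \<rho> GI (Wt \<mu>')
                          \<and> \<mu> - \<mu>' \<in> GI"
    and cc: "\<forall>\<mu>\<in>I. irred_U0 scale \<rho> GI (Wt \<mu>)"
    and G': "add_subgroup G'" "GI \<subseteq> G'" "G' \<subseteq> G"
    and lam: "lam \<in> I"
  shows "\<exists>W W'. irred_subquot scale \<rho> G' (wsum scale \<rho> ((+) lam ` G')) W W' \<and>
           (\<forall>\<mu>\<in>I. sq_wdim scale \<rho> W W' \<mu> = dim (Wt \<mu>)) \<and>
           (\<forall>X X'. irred_subquot scale \<rho> G' (wsum scale \<rho> ((+) lam ` G')) X X' \<and>
                   (\<forall>\<mu>\<in>I. sq_wdim scale \<rho> X X' \<mu> = dim (Wt \<mu>))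
                   \<longrightarrow> sq_iso scale \<rho> G' W W' X X')"
proof -
  define W where "W = U_apply scale \<rho> G' (Wt lam)"
  define NN where "NN = {N. submod scale \<rho> G' N \<and> N \<subseteq> W \<and> N \<inter> Wt lam \<subseteq> {0}}"
  define W' where "W' = span (\<Union>NN)"
  define M where "M = wsum scale \<rho> ((+) lam ` G')"
  have G'0: "0 \<in> G'" using G'(1) by (simp add: add_subgroup_def)
  have sumG': "set xs \<subseteq> G' \<Longrightarrow> sum_list xs \<in> G'" for xs
    by (induction xs) (use G'(1) in \<open>auto simp: add_subgroup_def\<close>)
  have st0: "submod scale \<rho> G' X \<Longrightarrow> \<forall>v\<in>X. \<rho> 0 v \<in> X" for X
    using G'0 unfolding submod_def by auto
  have subGI: "submod scale \<rho> G' X \<Longrightarrow> submod scale \<rho> GI X" for X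
    using G'(2) unfolding submod_def by auto
  have wlam_ne: "\<not> Wt lam \<subseteq> {0}"
  proof
    assume "Wt lam \<subseteq> {0}"
    moreover have "0 \<in> Wt lam" using wt_subspace subspace_0 by blast
    ultimately have "Wt lam = {0}" by auto
    then show False using I lam unfolding supp_def by auto
  qed
  have Wsub: "submod scale \<rho> G' W" unfolding W_def by (rule U_submod[OF G'(3)])
  have WM: "W \<subseteq> M"
    unfolding W_def M_def U_apply_def wsum_def
  proof (rule span_mono, rule subsetI)
    fix s assume "s \<in> {mono \<rho> xs v |xs v. set xs \<subseteq> G' \<and> v \<in> Wt lam}"
    then obtain xs v where s: "s = mono \<rho> xs v" "set xs \<subseteq> G'" "v \<in> Wt lam" by auto
    then have "s \<in> Wt (lam + sum_list xs)" using mono_wt G'(3) by auto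
    then show "s \<in> (\<Union>\<mu>\<in>(+) lam ` G'. Wt \<mu>)" using sumG'[OF s(2)] by auto
  qed
  have wtW: "\<mu> \<in> I \<Longrightarrow> Wt \<mu> \<subseteq> W" for \<mu>
  proof -
    assume m: "\<mu> \<in> I"
    have "Wt \<mu> \<subseteq> U_apply scale \<rho> GI (Wt \<mu>)" by (rule U_sup)
    also have "\<dots> = U_apply scale \<rho> GI (Wt lam)" using b m lam by blast
    also have "\<dots> \<subseteq> W" unfolding W_def by (rule U_mono[OF G'(2)])
    finally show ?thesis .
  qed
  have Wsp: "subspace W" using Wsub unfolding submod_def by auto
  have W'sub: "submod scale \<rho> G' W'"
    unfolding W'_def
  proof (rule span_submod[OF G'(3)], intro ballI)
    fix x s assume x: "x \<in> G'" and s: "s \<in> \<Union>NN"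
    then obtain N where "N \<in> NN" "s \<in> N" by auto
    then have "\<rho> x s \<in> \<Union>NN" using x unfolding NN_def submod_def by auto
    then show "\<rho> x s \<in> span (\<Union>NN)" by (rule span_base)
  qed
  have W'W: "W' \<subseteq> W" unfolding W'_def by (rule span_minimal) (use Wsp in \<open>auto simp: NN_def\<close>)
  have NY: "submod scale \<rho> G' N \<Longrightarrow> N \<inter> Wt lam \<subseteq> {0} \<Longrightarrow> N \<subseteq> Y lam" for N
    using sub_Y[OF wm, of N lam] st0[of N] unfolding submod_def by auto
  have W'Y: "W' \<subseteq> Y lam" unfolding W'_def
    by (rule span_minimal) (auto simp: Y_def NN_def dest!: NY)
  have W'lam: "W' \<inter> Wt lam \<subseteq> {0}" using W'Y Y_int[of lam] by auto
  have U0: "Wt \<mu> \<subseteq> X \<or> X \<inter> Wt \<mu> \<subseteq> {0}" if m: "\<mu> \<in> I" and X: "submod scale \<rho> G' X" for \<mu> X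
  proof -
    have "subspace (X \<inter> Wt \<mu>)" using X wt_subspace unfolding submod_def by (auto intro: subspace_inter)
    moreover have "\<forall>xs. set xs \<subseteq> GI \<and> sum_list xs = 0 \<longrightarrow> (\<forall>w\<in>X \<inter> Wt \<mu>. mono \<rho> xs w \<in> X \<inter> Wt \<mu>)"
    proof (intro allI impI ballI)
      fix xs w assume xs: "set xs \<subseteq> GI \<and> sum_list xs = 0" and w: "w \<in> X \<inter> Wt \<mu>"
      have "mono \<rho> xs w \<in> X" using mono_stable[of xs G' X w] xs w X G'(2) unfolding submod_def by auto
      moreover have "mono \<rho> xs w \<in> Wt (\<mu> + sum_list xs)" using mono_wt[of xs w \<mu>] xs w G' by auto
      ultimately show "mono \<rho> xs w \<in> X \<inter> Wt \<mu>" using xs by simp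
    qed
    ultimately have "X \<inter> Wt \<mu> = {0} \<or> X \<inter> Wt \<mu> = Wt \<mu>"
      using cc m unfolding irred_U0_def by blast
    then show ?thesis by auto
  qed
  have lamW: "Wt lam \<subseteq> W" using wtW lam .
  have irr: "irred_subquot scale \<rho> G' M W W'"
    unfolding irred_subquot_def
  proof (intro conjI allI impI)
    show "submod scale \<rho> G' W" "submod scale \<rho> G' W'" "W' \<subseteq> W" "W \<subseteq> M"
      by fact+
    show "W' \<noteq> W" using W'lam wlam_ne lamW by auto
  next
    fix X assume X: "submod scale \<rho> G' X \<and> W' \<subseteq> X \<and> X \<subseteq> W"
    show "X = W' \<or> X = W"
    proof (cases "X \<inter> Wt lam \<subseteq> {0}")
      case True
      then have "X \<in> NN" using X unfolding NN_def by auto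
      then have "X \<subseteq> W'" unfolding W'_def using span_superset by blast
      then show ?thesis using X by auto
    next
      case False
      then have "Wt lam \<subseteq> X" using U0[OF lam] X by auto
      then have "W \<subseteq> X" unfolding W_def using U_min X by auto
      then show ?thesis using X by auto
    qed
  qed
  have dim0: "dim (W' \<inter> Wt \<mu>) = 0" if m: "\<mu> \<in> I" for \<mu>
  proof -
    have "\<not> Wt \<mu> \<subseteq> W'"
    proof
      assume "Wt \<mu> \<subseteq> W'"
      then have "U_apply scale \<rho> GI (Wt \<mu>) \<subseteq> W'" using U_min subGI[OF W'sub] by auto
      moreover have "Wt lam \<subseteq> U_apply scale \<rho> GI (Wt lam)" by (rule U_sup)
      moreover have "U_apply scale \<rho> GI (Wt \<mu>) = U_apply scale \<rho> GI (Wt lam)" using b m lam by blast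
      ultimately have "Wt lam \<subseteq> W'" by auto
      then show False using W'lam wlam_ne by auto
    qed
    then have "W' \<inter> Wt \<mu> \<subseteq> {0}" using U0[OF m W'sub] by auto
    moreover have "0 \<in> W' \<inter> Wt \<mu>" using W'sub wt_subspace[of \<mu>] unfolding submod_def
      by (auto intro: subspace_0)
    ultimately have "W' \<inter> Wt \<mu> = {0}" by auto
    then show ?thesis using dim_zero_set by simp
  qed
  have dims: "\<forall>\<mu>\<in>I. sq_wdim scale \<rho> W W' \<mu> = dim (Wt \<mu>)"
  proof
    fix \<mu> assume m: "\<mu> \<in> I"
    have "W \<inter> Wt \<mu> = Wt \<mu>" using wtW[OF m] by auto
    then show "sq_wdim scale \<rho> W W' \<mu> = dim (Wt \<mu>)" unfolding sq_wdim_def using dim0[OF m] by simp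
  qed
  have uniq: "sq_iso scale \<rho> G' W W' X X'"
    if XX: "irred_subquot scale \<rho> G' M X X'" and Xd: "\<forall>\<mu>\<in>I. sq_wdim scale \<rho> X X' \<mu> = dim (Wt \<mu>)"
    for X X'
  proof -
    have Xs: "submod scale \<rho> G' X" and X's: "submod scale \<rho> G' X'" and X'X: "X' \<subseteq> X"
      and Xmax: "\<And>Z. submod scale \<rho> G' Z \<Longrightarrow> X' \<subseteq> Z \<Longrightarrow> Z \<subseteq> X \<Longrightarrow> Z = X' \<or> Z = X"
      using XX unfolding irred_subquot_def by auto
    obtain B0 where B0: "finite B0" "Wt lam \<subseteq> span B0" using fd unfolding fin_dim_def by auto
    have sXl: "subspace (X \<inter> Wt lam)" using Xs wt_subspace unfolding submod_def by (auto intro: subspace_inter)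
    have a: "dim (X \<inter> Wt lam) \<le> dim (Wt lam)" using fd_dim_mono[OF B0(2,1)] by auto
    have d: "dim (Wt lam) \<noteq> 0" using fd_dim0[OF B0(2,1)] wlam_ne by auto
    have "dim (X \<inter> Wt lam) - dim (X' \<inter> Wt lam) = dim (Wt lam)"
      using Xd lam unfolding sq_wdim_def by auto
    then have ab: "dim (X' \<inter> Wt lam) = 0" "dim (Wt lam) \<le> dim (X \<inter> Wt lam)" using a d by auto
    have X'lam: "X' \<inter> Wt lam \<subseteq> {0}"
      using fd_dim0[of "X' \<inter> Wt lam" B0] B0 ab(1) by auto
    have lamX: "Wt lam \<subseteq> X" using fd_dim_eq[OF B0(2,1) _ sXl ab(2)] by auto
    have WX: "W \<subseteq> X" unfolding W_def using U_min[OF lamX Xs] .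
    have X'Y: "X' \<subseteq> Y lam" using NY[OF X's X'lam] .
    have spsub: "submod scale \<rho> G' (span (A \<union> B))"
      if "submod scale \<rho> G' A" "submod scale \<rho> G' B" for A B
    proof (rule span_submod[OF G'(3)], intro ballI)
      fix x s assume "x \<in> G'" "s \<in> A \<union> B"
      then have "\<rho> x s \<in> A \<union> B" using that unfolding submod_def by auto
      then show "\<rho> x s \<in> span (A \<union> B)" by (rule span_base)
    qed
    have Xsp: "subspace X" "subspace X'" using Xs X's unfolding submod_def by auto
    have Z1: "span (W' \<union> X') = X' \<or> span (W' \<union> X') = X"
      apply (rule Xmax[OF spsub[OF W'sub X's]])
      using span_superset apply blast
      apply (rule span_minimal) using W'W WX X'X Xsp apply auto
      done
    have "span (W' \<union> X') \<subseteq> Y lam"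
      by (rule span_minimal) (use W'Y X'Y in \<open>auto simp: Y_def\<close>)
    then have "span (W' \<union> X') \<noteq> X" using lamX Y_int[of lam] wlam_ne by auto
    then have "span (W' \<union> X') = X'" using Z1 by auto
    then have W'X': "W' \<subseteq> X'" using span_superset by blast
    have Z2: "span (W \<union> X') = X' \<or> span (W \<union> X') = X"
      apply (rule Xmax[OF spsub[OF Wsub X's]])
      using span_superset apply blast
      apply (rule span_minimal) using WX X'X Xsp apply auto
      done
    have "\<not> W \<subseteq> X'" using lamW X'lam wlam_ne by auto
    then have "span (W \<union> X') \<noteq> X'" using span_superset by blast
    then have Z2': "span (W \<union> X') = X" using Z2 by auto
    have "W \<inter> X' \<in> NN"
      unfolding NN_def submod_def
      using Wsub X's X'lam unfolding submod_def by (auto intro: subspace_inter)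
    then have WX'W': "W \<inter> X' \<subseteq> W'" unfolding W'_def using span_superset by blast
    show ?thesis
      unfolding sq_iso_def
    proof (intro exI[of _ "\<lambda>x. x"] conjI ballI)
      show "Vector_Spaces.linear scale scale (\<lambda>x. x)" by (rule linear_ident)
    next
      fix w assume "w \<in> W" then show "w \<in> X" using WX by auto
    next
      fix w assume "w \<in> W" then show "w \<in> X' \<longleftrightarrow> w \<in> W'" using WX'W' W'X' by auto
    next
      fix u assume "u \<in> X"
      then have "u \<in> span (W \<union> X')" using Z2' by simp
      then obtain p q where "u = p + q" "p \<in> span W" "q \<in> span X'" unfolding span_Un by auto
      moreover have "span W = W" "span X' = X'" using Wsp Xsp(2) by auto
      ultimately show "\<exists>w\<in>W. u - w \<in> X'" by (intro bexI[of _ p]) auto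
    next
      fix x w assume "x \<in> G'" "w \<in> W"
      show "\<rho> x w - \<rho> x w \<in> X'" using Xsp(2) by (simp add: subspace_0)
    qed
  qed
  show ?thesis
    using irr dims uniq unfolding M_def by blast
qed

end


theorem lemma3p2:
  fixes sc :: "complex \<Rightarrow> 'v::ab_group_add \<Rightarrow> 'v"
    and \<rho> :: "complex \<Rightarrow> 'v \<Rightarrow> 'v"
    and G GI G' I :: "complex set" and c lam :: complex
  assumes G: "add_subgroup G" and rk: "grank G \<ge> 2"
    and V: "vir_module sc G c \<rho>" and HC: "harish_chandra sc \<rho>"
    and irr: "irreducible_module sc \<rho> G" and nontriv: "\<not> trivial_module sc G c \<rho>"
    and I: "finite I" "I \<subseteq> supp sc \<rho>"
    and GI: "add_subgroup GI" "GI \<subseteq> G"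
    and a: "\<exists>k::nat. k \<ge> 1 \<and> iso_Zk GI k"
    and b: "\<forall>\<mu>\<in>I. \<forall>\<mu>'\<in>I. U_apply sc \<rho> GI (wt sc \<rho> \<mu>) = U_apply sc \<rho> GI (wt sc \<rho> \<mu>')
                          \<and> \<mu> - \<mu>' \<in> GI"
    and cc: "\<forall>\<mu>\<in>I. irred_U0 sc \<rho> GI (wt sc \<rho> \<mu>)"
    and G': "add_subgroup G'" "GI \<subseteq> G'" "G' \<subseteq> G"
    and lam: "lam \<in> I"
  shows "\<exists>W W'. irred_subquot sc \<rho> G' (wsum sc \<rho> ((+) lam ` G')) W W' \<and>
           (\<forall>\<mu>\<in>I. sq_wdim sc \<rho> W W' \<mu> = vector_space.dim sc (wt sc \<rho> \<mu>)) \<and>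
           (\<forall>X X'. irred_subquot sc \<rho> G' (wsum sc \<rho> ((+) lam ` G')) X X' \<and>
                   (\<forall>\<mu>\<in>I. sq_wdim sc \<rho> X X' \<mu> = vector_space.dim sc (wt sc \<rho> \<mu>))
                   \<longrightarrow> sq_iso sc \<rho> G' W W' X X')"
proof -
  have vs: "vector_space sc" using V unfolding vir_module_def by auto
  interpret vs: vector_space sc by (rule vs)
  have lin: "x \<in> G \<Longrightarrow> Vector_Spaces.linear sc sc (\<rho> x)" for x
    using V unfolding vir_module_def by auto
  have G0: "0 \<in> G" using G unfolding add_subgroup_def by auto
  have shift: "\<rho> x v \<in> wt sc \<rho> (\<mu> + x)" if x: "x \<in> G" and v: "v \<in> wt sc \<rho> \<mu>" for x v \<mu>
  proof -
    have "\<rho> 0 (\<rho> x v) - \<rho> x (\<rho> 0 v) = sc (x - 0) (\<rho> (0 + x) v) +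
        (if 0 = - x then sc ((0^3 - 0) / 12 * c) v else 0)"
      using V x G0 unfolding vir_module_def by blast
    then have e: "\<rho> 0 (\<rho> x v) - \<rho> x (\<rho> 0 v) = sc x (\<rho> x v)" by simp
    have "\<rho> x (\<rho> 0 v) = sc \<mu> (\<rho> x v)"
      using v lin[OF x] unfolding wt_def Vector_Spaces.linear_iff by auto
    then have "\<rho> 0 (\<rho> x v) = sc \<mu> (\<rho> x v) + sc x (\<rho> x v)" using e by (simp add: algebra_simps)
    then show ?thesis unfolding wt_def by (simp add: vs.scale_left_distrib)
  qed
  have "VM sc \<rho> G" unfolding VM_def VM_axioms_def using vs lin G0 shift by blast
  then interpret VM sc \<rho> G .
  have wm: "vs.span (\<Union>\<mu>\<in>UNIV. wt sc \<rho> \<mu>) = UNIV"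
    using HC unfolding harish_chandra_def weight_module_def wsum_def by auto
  have fd: "\<forall>\<mu>. fin_dim sc (wt sc \<rho> \<mu>)" using HC unfolding harish_chandra_def by auto
  show ?thesis by (rule main[OF wm fd I(2) b cc G' lam])
qed

end
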